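(* Let $n\ge2$ and let $M$ be a nonderogatory $d\times d$ complex matrix with minimal polynomial $\mathbf p$. Every maximal subalgebra $\mathcal B$ of $\mathcal T_{n,d}[\mathcal P(M)]$ equals $\mathfrak B(\mathbf p_+,\mathbf p_-,\boldsymbol\chi)$ for some polynomials $\mathbf p_+,\mathbf p_-,\boldsymbol\chi\in\mathbb C[X]$ with $\mathbf p_+\mathbf p_-$ dividing $\mathbf p$ and $\boldsymbol\chi$ relatively prime to $\mathbf p$.
   Context: A nonderogatory matrix is one whose minimal polynomial equals its characteristic polynomial; $\mathcal P(M)$ is the algebra of polynomials in $M$; $\mathcal T_{n,d}[\mathcal P(M)]$ is the set of $n\times n$ block Toeplitz matrices $(B_{i-j})_{i,j=0}^{n-1}$ with all $B_m\in\mathcal P(M)$. A maximal subalgebra of $\mathcal T_{n,d}[\mathcal P(M)]$ is a subalgebra (linear subspace closed under multiplication) contained in it and maximal under inclusion among such. For $\mathbf p_+,\mathbf p_-,\boldsymbol\chi$ with $\mathbf p_+\mathbf p_-\mid\mathbf p$ and $\boldsymbol\chi$ coprime to $\mathbf p$, and $\mathbf q=\mathbf p/(\mathbf p_+\mathbf p_-)$, $\mathfrak B(\mathbf p_+,\mathbf p_-,\boldsymbol\chi)$ is the set of block Toeplitz matrices $A=(A_{i-j})$ with all $A_i\in\mathcal P(M)$ such that for each $i=1,\dots,n-1$ there are polynomials $\mathbf a_i,\mathbf a_{i-n}$ with $A_i=\mathbf p_+(M)\mathbf a_i(M)$, $A_{i-n}=\mathbf p_-(M)\mathbf a_{i-n}(M)$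 and $\mathbf q\mid\mathbf a_i-\boldsymbol\chi\mathbf a_{i-n}$. *)

theory Defs
  imports "Jordan_Normal_Form.Char_Poly"
begin

definition poly_mat :: "complex poly \<Rightarrow> complex mat \<Rightarrow> complex mat" where
  "poly_mat p M = mat (dim_row M) (dim_col M)
     (\<lambda>(i,j). \<Sum>k\<le>degree p. coeff p k * (M ^\<^sub>m k) $$ (i,j))"

definition is_min_poly :: "complex mat \<Rightarrow> complex poly \<Rightarrow> bool" where
  "is_min_poly M p \<longleftrightarrow> monic p \<and> poly_mat p M = 0\<^sub>m (dim_row M) (dim_col M) \<and>
     (\<forall>q. poly_mat q M = 0\<^sub>m (dim_row M) (dim_col M) \<longrightarrow> p dvd q)"

definition nonderogatory :: "complex mat \<Rightarrow> bool" where
  "nonderogatory M \<longleftrightarrow> is_min_poly M (char_poly M)"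

definition polys_in :: "complex mat \<Rightarrow> complex mat set" where
  "polys_in M = {poly_mat q M | q. True}"

(* the nd x nd block Toeplitz matrix (B_{i-j})_{i,j=0}^{n-1} with d x d blocks *)
definition block_toeplitz :: "nat \<Rightarrow> nat \<Rightarrow> (int \<Rightarrow> complex mat) \<Rightarrow> complex mat" where
  "block_toeplitz n d B = mat (n*d) (n*d)
     (\<lambda>(i,j). B (int (i div d) - int (j div d)) $$ (i mod d, j mod d))"

definition toeplitz_alg :: "nat \<Rightarrow> nat \<Rightarrow> complex mat \<Rightarrow> complex mat set" where
  "toeplitz_alg n d M = {block_toeplitz n d B | B. \<forall>m. \<bar>m\<bar> < int n \<longrightarrow> B m \<in> polys_in M}"

definition is_subalgebra :: "nat \<Rightarrow> complex mat set \<Rightarrow> bool" where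
  "is_subalgebra N S \<longleftrightarrow> S \<subseteq> carrier_mat N N \<and> 0\<^sub>m N N \<in> S \<and>
     (\<forall>A\<in>S. \<forall>B\<in>S. A + B \<in> S) \<and> (\<forall>c. \<forall>A\<in>S. c \<cdot>\<^sub>m A \<in> S) \<and>
     (\<forall>A\<in>S. \<forall>B\<in>S. A * B \<in> S)"

definition maximal_subalgebra_of :: "nat \<Rightarrow> complex mat set \<Rightarrow> complex mat set \<Rightarrow> bool" where
  "maximal_subalgebra_of N T S \<longleftrightarrow> is_subalgebra N S \<and> S \<subseteq> T \<and>
     (\<forall>S'. is_subalgebra N S' \<and> S' \<subseteq> T \<and> S \<subseteq> S' \<longrightarrow> S' = S)"

definition frakB :: "nat \<Rightarrow> nat \<Rightarrow> complex mat \<Rightarrow> complex poly \<Rightarrow> complex poly \<Rightarrow> complex poly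
    \<Rightarrow> complex poly \<Rightarrow> complex mat set" where
  "frakB n d M p pp pm chi = {block_toeplitz n d A | A.
     (\<forall>m. \<bar>m\<bar> < int n \<longrightarrow> A m \<in> polys_in M) \<and>
     (\<forall>i\<in>{1..int n - 1}. \<exists>a a'.
         A i = poly_mat pp M * poly_mat a M \<and>
         A (i - int n) = poly_mat pm M * poly_mat a' M \<and>
         (p div (pp * pm)) dvd (a - chi * a'))}"

end

theory Submission
  imports Defs "HOL-Computational_Algebra.Polynomial_Factorial" "HOL-Computational_Algebra.Field_as_Ring" "HOL-Computational_Algebra.Fundamental_Theorem_Algebra"
begin


lemma pm_carrier[simp]: "M \<in> carrier_mat d d \<Longrightarrow> poly_mat f M \<in> carrier_mat d d"
  unfolding poly_mat_def by auto

lemma pm_dims[simp]: "dim_row (poly_mat f M) = dim_row M" "dim_col (poly_mat f M) = dim_col M"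
  unfolding poly_mat_def by auto

lemma pm_entry:
  assumes "M \<in> carrier_mat d d" "i < d" "j < d" "degree f \<le> N"
  shows "poly_mat f M $$ (i,j) = (\<Sum>k\<le>N. coeff f k * (M ^\<^sub>m k) $$ (i,j))"
proof -
  have "poly_mat f M $$ (i,j) = (\<Sum>k\<le>degree f. coeff f k * (M ^\<^sub>m k) $$ (i,j))"
    using assms unfolding poly_mat_def by auto
  also have "\<dots> = (\<Sum>k\<le>N. coeff f k * (M ^\<^sub>m k) $$ (i,j))"
    by (rule sum.mono_neutral_left) (use assms in \<open>auto simp: coeff_eq_0\<close>)
  finally show ?thesis .
qed

lemma pm_add: assumes "M \<in> carrier_mat d d"
  shows "poly_mat (f + g) M = poly_mat f M + poly_mat g M"
proof (rule eq_matI)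
  fix i j assume ij: "i < dim_row (poly_mat f M + poly_mat g M)" "j < dim_col (poly_mat f M + poly_mat g M)"
  let ?N = "max (degree f) (degree g)"
  have d: "degree (f+g) \<le> ?N" by (simp add: degree_add_le)
  from ij assms have i: "i < d" "j < d" by auto
  show "poly_mat (f + g) M $$ (i, j) = (poly_mat f M + poly_mat g M) $$ (i, j)"
    using i assms
    by (simp add: pm_entry[OF assms _ _ d] pm_entry[of M d i j f ?N] pm_entry[of M d i j g ?N]
        distrib_right sum.distrib)
qed (use assms in auto)

lemma pm_smult: assumes "M \<in> carrier_mat d d"
  shows "poly_mat (Polynomial.smult c f) M = c \<cdot>\<^sub>m poly_mat f M"
proof (rule eq_matI)
  fix i j assume ij: "i < dim_row (c \<cdot>\<^sub>m poly_mat f M)" "j < dim_col (c \<cdot>\<^sub>m poly_mat f M)"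
  from ij assms have i: "i < d" "j < d" by auto
  have d: "degree (Polynomial.smult c f) \<le> degree f" by simp
  show "poly_mat (Polynomial.smult c f) M $$ (i, j) = (c \<cdot>\<^sub>m poly_mat f M) $$ (i, j)"
    using i assms
    by (simp add: pm_entry[OF assms _ _ d] pm_entry[of M d i j f "degree f"] sum_distrib_left mult.assoc)
qed (use assms in auto)

lemma pm_zero: assumes "M \<in> carrier_mat d d"
  shows "poly_mat 0 M = 0\<^sub>m d d"
  using assms unfolding poly_mat_def by (auto intro!: eq_matI)

lemma pm_const: assumes "M \<in> carrier_mat d d"
  shows "poly_mat [:c:] M = c \<cdot>\<^sub>m 1\<^sub>m d"
  using assms unfolding poly_mat_def by (auto intro!: eq_matI)

lemma pow_comm: assumes "M \<in> carrier_mat d d"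
  shows "M ^\<^sub>m k * M = M * M ^\<^sub>m k"
proof (induction k)
  case 0 then show ?case using assms by simp
next
  case (Suc k)
  have "M ^\<^sub>m Suc k * M = (M ^\<^sub>m k * M) * M" by simp
  also have "\<dots> = (M * M ^\<^sub>m k) * M" using Suc by simp
  also have "\<dots> = M * (M ^\<^sub>m k * M)" using assms by (simp add: assoc_mult_mat[of _ d d _ d _ d])
  finally show ?case by simp
qed

lemma pm_pCons0: assumes "M \<in> carrier_mat d d"
  shows "poly_mat (pCons 0 f) M = M * poly_mat f M"
proof (rule eq_matI)
  fix i j assume ij: "i < dim_row (M * poly_mat f M)" "j < dim_col (M * poly_mat f M)"
  from ij assms have i: "i < d" "j < d" by auto
  have d: "degree (pCons 0 f) \<le> Suc (degree f)" by (simp add: degree_pCons_le)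
  have "poly_mat (pCons 0 f) M $$ (i, j) = (\<Sum>k\<le>Suc (degree f). coeff (pCons 0 f) k * (M ^\<^sub>m k) $$ (i,j))"
    by (rule pm_entry[OF assms i d])
  also have "\<dots> = (\<Sum>k\<le>degree f. coeff f k * (M ^\<^sub>m Suc k) $$ (i,j))"
    unfolding sum.atMost_Suc_shift by simp
  also have "\<dots> = (\<Sum>k\<le>degree f. coeff f k * (\<Sum>l<d. M $$ (i,l) * (M ^\<^sub>m k) $$ (l,j)))"
  proof (rule sum.cong[OF refl])
    fix k
    have "M ^\<^sub>m Suc k = M * M ^\<^sub>m k" using pow_comm[OF assms, of k] by simp
    then have "(M ^\<^sub>m Suc k) $$ (i,j) = (\<Sum>l<d. M $$ (i,l) * (M ^\<^sub>m k) $$ (l,j))"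
      using assms i by (simp add: scalar_prod_def atLeast0LessThan)
    then show "coeff f k * (M ^\<^sub>m Suc k) $$ (i,j) = coeff f k * (\<Sum>l<d. M $$ (i,l) * (M ^\<^sub>m k) $$ (l,j))"
      by simp
  qed
  also have "\<dots> = (\<Sum>l<d. M $$ (i,l) * (\<Sum>k\<le>degree f. coeff f k * (M ^\<^sub>m k) $$ (l,j)))"
    by (simp add: sum_distrib_left sum_distrib_right mult.assoc mult.left_commute sum.swap[of _ "{..degree f}"])
  also have "\<dots> = (\<Sum>l<d. M $$ (i,l) * poly_mat f M $$ (l,j))"
    using i by (intro sum.cong refl) (simp add: pm_entry[OF assms _ _ order_refl])
  also have "\<dots> = (M * poly_mat f M) $$ (i, j)"
    using assms i by (simp add: scalar_prod_def atLeast0LessThan)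
  finally show "poly_mat (pCons 0 f) M $$ (i, j) = (M * poly_mat f M) $$ (i, j)" .
qed (use assms in auto)

lemma pm_mult: assumes "M \<in> carrier_mat d d"
  shows "poly_mat (f * g) M = poly_mat f M * poly_mat g M"
proof (induct f rule: pCons_induct)
  show "poly_mat (0 * g) M = poly_mat 0 M * poly_mat g M" using assms by (simp add: pm_zero)
next
  fix a f assume IH: "poly_mat (f * g) M = poly_mat f M * poly_mat g M"
  have e: "pCons a f = [:a:] + pCons 0 f" by simp
  have "poly_mat (pCons a f * g) M = poly_mat (Polynomial.smult a g + pCons 0 (f * g)) M" by simp
  also have "\<dots> = a \<cdot>\<^sub>m poly_mat g M + M * (poly_mat f M * poly_mat g M)"
    using IH assms by (simp add: pm_add pm_smult pm_pCons0)
  also have "\<dots> = (a \<cdot>\<^sub>m 1\<^sub>m d + M * poly_mat f M) * poly_mat g M"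
  proof -
    have c: "poly_mat f M \<in> carrier_mat d d" "poly_mat g M \<in> carrier_mat d d" using assms by auto
    have "(a \<cdot>\<^sub>m 1\<^sub>m d + M * poly_mat f M) * poly_mat g M = (a \<cdot>\<^sub>m 1\<^sub>m d) * poly_mat g M + (M * poly_mat f M) * poly_mat g M"
      by (rule add_mult_distrib_mat[of _ d d]) (use assms c in auto)
    also have "(a \<cdot>\<^sub>m 1\<^sub>m d) * poly_mat g M = a \<cdot>\<^sub>m (1\<^sub>m d * poly_mat g M)"
      by (rule mult_smult_assoc_mat[of _ d d _ d]) (use c in auto)
    also have "1\<^sub>m d * poly_mat g M = poly_mat g M" using left_mult_one_mat[OF c(2)] .
    also have "(M * poly_mat f M) * poly_mat g M = M * (poly_mat f M * poly_mat g M)"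
      by (rule assoc_mult_mat[of _ d d _ d _ d]) (use assms c in auto)
    finally show ?thesis by simp
  qed
  also have "\<dots> = poly_mat (pCons a f) M * poly_mat g M"
  proof -
    have "poly_mat (pCons a f) M = a \<cdot>\<^sub>m 1\<^sub>m d + M * poly_mat f M"
      unfolding e pm_add[OF assms] pm_const[OF assms] pm_pCons0[OF assms] ..
    then show ?thesis by simp
  qed
  finally show "poly_mat (pCons a f * g) M = poly_mat (pCons a f) M * poly_mat g M" .
qed

lemma pm_minus: assumes "M \<in> carrier_mat d d"
  shows "poly_mat (f - g) M = poly_mat f M - poly_mat g M"
proof -
  have "poly_mat f M = poly_mat (f - g) M + poly_mat g M" using pm_add[OF assms, of "f-g" g] by simp
  then show ?thesis using assms by (auto intro!: eq_matI)
qed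

lemma pm_zero_iff: assumes "M \<in> carrier_mat d d" "is_min_poly M p"
  shows "poly_mat f M = 0\<^sub>m d d \<longleftrightarrow> p dvd f"
proof
  assume "poly_mat f M = 0\<^sub>m d d" then show "p dvd f" using assms unfolding is_min_poly_def by auto
next
  assume "p dvd f" then obtain k where "f = p * k" by auto
  then show "poly_mat f M = 0\<^sub>m d d" using assms unfolding is_min_poly_def
    by (simp add: pm_mult)
qed

lemma pm_eq_iff: assumes "M \<in> carrier_mat d d" "is_min_poly M p"
  shows "poly_mat f M = poly_mat g M \<longleftrightarrow> p dvd (f - g)"
proof -
  have "poly_mat f M = poly_mat g M \<longleftrightarrow> poly_mat f M - poly_mat g M = 0\<^sub>m d d"
  proof
    assume h: "poly_mat f M - poly_mat g M = 0\<^sub>m d d"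
    show "poly_mat f M = poly_mat g M"
    proof (rule eq_matI)
      fix i j assume "i < dim_row (poly_mat g M)" "j < dim_col (poly_mat g M)"
      then have ij: "i < d" "j < d" using assms(1) by auto
      from arg_cong[OF h, of "\<lambda>X. X $$ (i,j)"] ij assms(1)
      show "poly_mat f M $$ (i, j) = poly_mat g M $$ (i, j)" by simp
    qed auto
  qed (use assms(1) in auto)
  then have "poly_mat f M = poly_mat g M \<longleftrightarrow> poly_mat (f - g) M = 0\<^sub>m d d"
    using assms(1) by (simp add: pm_minus)
  then show ?thesis using pm_zero_iff[OF assms] by simp
qed



definition btp :: "nat \<Rightarrow> nat \<Rightarrow> complex mat \<Rightarrow> (int \<Rightarrow> complex poly) \<Rightarrow> complex mat" where
  "btp n d M F = block_toeplitz n d (\<lambda>m. poly_mat (F m) M)"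

lemma btp_carrier[simp]: "btp n d M F \<in> carrier_mat (n*d) (n*d)"
  unfolding btp_def block_toeplitz_def by auto

lemma btp_dims[simp]: "dim_row (btp n d M F) = n*d" "dim_col (btp n d M F) = n*d"
  unfolding btp_def block_toeplitz_def by auto

lemma idx_div: "r < (d::nat) \<Longrightarrow> (i*d + r) div d = i" "r < (d::nat) \<Longrightarrow> (i*d + r) mod d = r"
  by auto

lemma idx_lt: "i < (n::nat) \<Longrightarrow> r < d \<Longrightarrow> i*d + r < n*d"
proof -
  assume "i < n" "r < d"
  then have "i*d + r < i*d + d" by simp
  also have "\<dots> = Suc i * d" by simp
  also have "\<dots> \<le> n * d" using \<open>i<n\<close> by (intro mult_right_mono) auto
  finally show ?thesis .
qed

lemma btp_entry:
  assumes "i < n" "j < n" "r < d" "c < d"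
  shows "btp n d M F $$ (i*d+r, j*d+c) = poly_mat (F (int i - int j)) M $$ (r,c)"
  using assms idx_lt[of i n r d] idx_lt[of j n c d] unfolding btp_def block_toeplitz_def
  by (simp add: idx_div)

lemma idx_decomp: fixes I n d :: nat shows "I < n*d \<Longrightarrow> I div d < n \<and> I mod d < d \<and> I = (I div d)*d + I mod d"
proof -
  assume a: "I < n*d"
  then have "d > 0" by (cases d) auto
  then show ?thesis using a by (simp add: less_mult_imp_div_less)
qed

lemma block_toeplitz_cong:
  assumes "\<And>m. \<bar>m\<bar> < int n \<Longrightarrow> B m = B' m"
  shows "block_toeplitz n d B = block_toeplitz n d B'"
  unfolding block_toeplitz_def
proof (rule eq_matI)
  fix I J assume "I < dim_row (mat (n * d) (n * d) (\<lambda>(i, j). B' (int (i div d) - int (j div d)) $$ (i mod d, j mod d)))"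
    "J < dim_col (mat (n * d) (n * d) (\<lambda>(i, j). B' (int (i div d) - int (j div d)) $$ (i mod d, j mod d)))"
  then have IJ: "I < n*d" "J < n*d" by auto
  then have "I div d < n" "J div d < n" using idx_decomp by blast+
  then have "\<bar>int (I div d) - int (J div d)\<bar> < int n" by auto
  then show "mat (n * d) (n * d) (\<lambda>(i, j). B (int (i div d) - int (j div d)) $$ (i mod d, j mod d)) $$ (I, J) =
         mat (n * d) (n * d) (\<lambda>(i, j). B' (int (i div d) - int (j div d)) $$ (i mod d, j mod d)) $$ (I, J)"
    using IJ assms by simp
qed auto

lemma toeplitz_alg_iff:
  "A \<in> toeplitz_alg n d M \<longleftrightarrow> (\<exists>F. A = btp n d M F)"
proof
  assume "A \<in> toeplitz_alg n d M"
  then obtain B where A: "A = block_toeplitz n d B" and B: "\<forall>m. \<bar>m\<bar> < int n \<longrightarrow> B m \<in> polys_in M"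
    unfolding toeplitz_alg_def by auto
  define F where "F m = (SOME f. B m = poly_mat f M)" for m
  have "\<And>m. \<bar>m\<bar> < int n \<Longrightarrow> B m = poly_mat (F m) M"
  proof -
    fix m assume "\<bar>m\<bar> < int n"
    then have "\<exists>f. B m = poly_mat f M" using B unfolding polys_in_def by auto
    then show "B m = poly_mat (F m) M" unfolding F_def by (rule someI_ex)
  qed
  then have "A = btp n d M F" unfolding A btp_def by (rule block_toeplitz_cong)
  then show "\<exists>F. A = btp n d M F" by blast
next
  assume "\<exists>F. A = btp n d M F"
  then show "A \<in> toeplitz_alg n d M" unfolding toeplitz_alg_def btp_def polys_in_def by blast
qed

lemma btp_eq_iff:
  assumes M: "M \<in> carrier_mat d d" and p: "is_min_poly M p"
  shows "btp n d M F = btp n d M G \<longleftrightarrow> (\<forall>m. \<bar>m\<bar> < int n \<longrightarrow> p dvd (F m - G m))"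
proof
  assume h: "\<forall>m. \<bar>m\<bar> < int n \<longrightarrow> p dvd (F m - G m)"
  show "btp n d M F = btp n d M G" unfolding btp_def
    by (rule block_toeplitz_cong) (use h pm_eq_iff[OF M p] in auto)
next
  assume h: "btp n d M F = btp n d M G"
  show "\<forall>m. \<bar>m\<bar> < int n \<longrightarrow> p dvd (F m - G m)"
  proof (intro allI impI)
    fix m assume m: "\<bar>m\<bar> < int n"
    define i where "i = nat (max m 0)"
    define j where "j = nat (max (-m) 0)"
    have ij: "i < n" "j < n" "int i - int j = m" using m unfolding i_def j_def by auto
    have "poly_mat (F m) M = poly_mat (G m) M"
    proof (rule eq_matI)
      fix r c assume "r < dim_row (poly_mat (G m) M)" "c < dim_col (poly_mat (G m) M)"
      then have rc: "r < d" "c < d" using M by auto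
      from arg_cong[OF h, of "\<lambda>X. X $$ (i*d+r, j*d+c)"] have
        "btp n d M F $$ (i*d+r, j*d+c) = btp n d M G $$ (i*d+r, j*d+c)" .
      then show "poly_mat (F m) M $$ (r, c) = poly_mat (G m) M $$ (r, c)"
        unfolding btp_entry[OF ij(1,2) rc] ij(3) .
    qed auto
    then show "p dvd (F m - G m)" using pm_eq_iff[OF M p] by blast
  qed
qed

lemma sum_split_blocks: fixes n d :: nat shows "(\<Sum>K<n*d. (f K :: 'a :: comm_monoid_add)) = (\<Sum>k<n. \<Sum>l<d. f (k*d + l))"
proof -
  have "(\<Sum>K<n*d. f K) = (\<Sum>k<n. sum f {k*d..<k*d+d})" using sum.nat_group[of f d n] by simp
  also have "\<dots> = (\<Sum>k<n. \<Sum>l<d. f (k*d + l))"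
  proof (rule sum.cong[OF refl])
    fix k
    have "sum f {k*d..<k*d+d} = sum f ((\<lambda>l. k*d + l) ` {..<d})"
      by (simp add: lessThan_atLeast0 image_add_atLeastLessThan add.commute)
    also have "\<dots> = (\<Sum>l<d. f (k*d + l))" by (subst sum.reindex) (auto simp: inj_on_def)
    finally show "sum f {k*d..<k*d+d} = (\<Sum>l<d. f (k*d + l))" .
  qed
  finally show ?thesis .
qed

lemma pm_sum_entry:
  assumes M: "M \<in> carrier_mat d d" and rc: "r < d" "c < d"
  shows "poly_mat (\<Sum>k\<in>A. h k) M $$ (r,c) = (\<Sum>k\<in>A. poly_mat (h k) M $$ (r,c))"
proof (induction A rule: infinite_finite_induct)
  case (infinite A) then show ?case using M rc by (simp add: pm_zero)
next
  case empty then show ?case using M rc by (simp add: pm_zero)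
next
  case (insert x F) then show ?case using M rc by (simp add: pm_add)
qed

definition conv :: "nat \<Rightarrow> (int \<Rightarrow> complex poly) \<Rightarrow> (int \<Rightarrow> complex poly) \<Rightarrow> nat \<Rightarrow> nat \<Rightarrow> complex poly" where
  "conv n F G i j = (\<Sum>k<n. F (int i - int k) * G (int k - int j))"

lemma btp_mult_entry:
  assumes M: "M \<in> carrier_mat d d" and ij: "i < n" "j < n" and rc: "r < d" "c < d"
  shows "(btp n d M F * btp n d M G) $$ (i*d+r, j*d+c) = poly_mat (conv n F G i j) M $$ (r,c)"
proof -
  have "(btp n d M F * btp n d M G) $$ (i*d+r, j*d+c) =
        (\<Sum>K<n*d. btp n d M F $$ (i*d+r, K) * btp n d M G $$ (K, j*d+c))"
    using idx_lt[OF ij(1) rc(1)] idx_lt[OF ij(2) rc(2)]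
        using idx_lt[OF ij(1) rc(1)] idx_lt[OF ij(2) rc(2)]
    by (simp add: scalar_prod_def atLeast0LessThan)
  also have "\<dots> = (\<Sum>k<n. \<Sum>l<d. btp n d M F $$ (i*d+r, k*d+l) * btp n d M G $$ (k*d+l, j*d+c))"
    by (rule sum_split_blocks)
  also have "\<dots> = (\<Sum>k<n. \<Sum>l<d. poly_mat (F (int i - int k)) M $$ (r,l) * poly_mat (G (int k - int j)) M $$ (l,c))"
        using ij rc by (intro sum.cong refl) (simp add: btp_entry)
  also have "\<dots> = (\<Sum>k<n. (poly_mat (F (int i - int k)) M * poly_mat (G (int k - int j)) M) $$ (r,c))"
        using M rc by (intro sum.cong refl) (simp add: scalar_prod_def atLeast0LessThan)
  also have "\<dots> = (\<Sum>k<n. poly_mat (F (int i - int k) * G (int k - int j)) M $$ (r,c))"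
    by (simp only: pm_mult[OF M])
  also have "\<dots> = poly_mat (conv n F G i j) M $$ (r,c)"
    unfolding conv_def by (rule pm_sum_entry[symmetric, OF M rc])
  finally show ?thesis .
qed



lemma noncoprime_root:
  fixes f g :: "complex poly"
  assumes "g \<noteq> 0" "\<not> coprime f g"
  shows "\<exists>z. poly f z = 0 \<and> poly g z = 0"
proof -
  define h where "h = gcd f g"
  have h0: "h \<noteq> 0" using assms(1) unfolding h_def by simp
  have hu: "\<not> is_unit h" using assms(2) unfolding h_def using is_unit_gcd by blast
  have "degree h \<noteq> 0"
  proof
    assume "degree h = 0"
    then obtain c where "h = [:c:]" by (metis degree_eq_zeroE)
    then show False using h0 hu by (simp add: is_unit_poly_iff)
  qed
  then have "\<not> constant (poly h)" using constant_degree[of h] by simp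
  then obtain z where z: "poly h z = 0" using fundamental_theorem_of_algebra by blast
  have "h dvd f" "h dvd g" unfolding h_def by auto
  then show ?thesis using z by (metis dvd_trans poly_eq_0_iff_dvd)
qed

inductive_set Gam :: "complex poly \<Rightarrow> (complex poly \<times> complex poly) set \<Rightarrow> (complex poly \<times> complex poly) set"
  for q P where
  base: "(a,b) \<in> P \<Longrightarrow> (b, a) \<in> Gam q P"
| qq: "(q, 0) \<in> Gam q P"
| add: "(y,x) \<in> Gam q P \<Longrightarrow> (y',x') \<in> Gam q P \<Longrightarrow> (y+y', x+x') \<in> Gam q P"
| mul: "(y,x) \<in> Gam q P \<Longrightarrow> (c*y, c*x) \<in> Gam q P"

lemma Gam_inv:
  assumes "(y,x) \<in> Gam q P" "\<forall>(a,b)\<in>P. \<forall>(a',b')\<in>P. q dvd a*b' - b*a'" "(a,b) \<in> P"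
  shows "q dvd a*y - b*x"
  using assms(1)
proof (induction rule: Gam.induct)
  case (base a' b') then show ?case using assms(2,3) by blast
next
  case qq then show ?case by simp
next
  case (add y x y' x')
  have "a*(y+y') - b*(x+x') = (a*y - b*x) + (a*y' - b*x')" by (simp add: algebra_simps)
  then show ?case using add by (metis dvd_add)
next
  case (mul y x c)
  have "a*(c*y) - b*(c*x) = c*(a*y - b*x)" by (simp add: algebra_simps)
  then show ?case using mul by simp
qed

lemma chi_exists:
  fixes q p :: "complex poly" and P :: "(complex poly \<times> complex poly) set"
  assumes p0: "p \<noteq> 0" and qp: "q dvd p"
   and rel: "\<forall>(a,b)\<in>P. \<forall>(a',b')\<in>P. q dvd a*b' - b*a'"
   and ca: "\<And>g. g dvd q \<Longrightarrow> (\<forall>(a,b)\<in>P. g dvd a) \<Longrightarrow> is_unit g"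
   and cb: "\<And>g. g dvd q \<Longrightarrow> (\<forall>(a,b)\<in>P. g dvd b) \<Longrightarrow> is_unit g"
  shows "\<exists>chi. coprime chi p \<and> (\<forall>(a,b)\<in>P. q dvd a - chi*b)"
proof -
  have q0: "q \<noteq> 0" using p0 qp by auto
  define Y where "Y = {y. y \<noteq> 0 \<and> (\<exists>x. (y,x) \<in> Gam q P)}"
  have "q \<in> Y" unfolding Y_def using q0 Gam.qq by blast
  define g where "g = arg_min degree (\<lambda>y. y \<in> Y)"
  from arg_min_nat_lemma[of "\<lambda>y. y \<in> Y" q degree, OF \<open>q \<in> Y\<close>]
  have gY: "g \<in> Y" and gmin: "\<And>y. y \<in> Y \<Longrightarrow> degree g \<le> degree y" unfolding g_def by auto
  from gY obtain xg where g0: "g \<noteq> 0" and xg: "(g, xg) \<in> Gam q P" unfolding Y_def by auto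
  have gdvd: "g dvd y" if "(y,x) \<in> Gam q P" for y x
  proof (rule ccontr)
    assume nd: "\<not> g dvd y"
    have "(-(y div g) * g, -(y div g) * xg) \<in> Gam q P" by (rule Gam.mul[OF xg])
    from Gam.add[OF that this] have "(y + -(y div g) * g, x + -(y div g) * xg) \<in> Gam q P" .
    moreover have "y + -(y div g) * g = y mod g" using minus_div_mult_eq_mod[of y g] by simp
    ultimately have "(y mod g, x + -(y div g) * xg) \<in> Gam q P" by simp
    moreover have "y mod g \<noteq> 0" using nd by (simp add: mod_eq_0_iff_dvd)
    ultimately have "y mod g \<in> Y" unfolding Y_def by blast
    then have "degree g \<le> degree (y mod g)" by (rule gmin)
    moreover have "degree (y mod g) < degree g" using degree_mod_less_degree[OF g0 nd] .
    ultimately show False by simp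
  qed
  have "g dvd q" using gdvd[OF Gam.qq] .
  moreover have "\<forall>(a,b)\<in>P. g dvd b" using gdvd Gam.base by blast
  ultimately have "is_unit g" using cb by blast
  then obtain c where gc: "g = [:c:]" and "c dvd 1" using is_unit_poly_iff by blast
  then have c0: "c \<noteq> 0" by auto
  define chi0 where "chi0 = [:1/c:] * xg"
  have "([:1/c:] * g, chi0) \<in> Gam q P" unfolding chi0_def by (rule Gam.mul[OF xg])
  moreover have "[:1/c:] * g = 1" using gc c0 by (simp add: one_pCons)
  ultimately have g1: "(1, chi0) \<in> Gam q P" by simp
  have chi0P: "q dvd a - chi0 * b" if "(a,b) \<in> P" for a b
    using Gam_inv[OF g1 rel that] by (simp add: mult.commute)
  have chi0q: "poly chi0 z \<noteq> 0" if "poly q z = 0" for z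
  proof
    assume "poly chi0 z = 0"
    then have d1: "[:-z,1:] dvd chi0" "[:-z,1:] dvd q" using that by (auto simp: poly_eq_0_iff_dvd)
    have "\<forall>(a,b)\<in>P. [:-z,1:] dvd a"
    proof (clarify)
      fix a b assume ab: "(a,b) \<in> P"
      have "a = (a - chi0 * b) + chi0 * b" by simp
      moreover have "[:-z,1:] dvd (a - chi0 * b)" using dvd_trans[OF d1(2) chi0P[OF ab]] .
      moreover have "[:-z,1:] dvd chi0 * b" using d1(1) by simp
      ultimately show "[:-z,1:] dvd a" by (metis dvd_add)
    qed
    then have "is_unit [:-z,1:]" using ca d1(2) by blast
    then show False by (simp add: is_unit_poly_iff)
  qed
  define Z where "Z = {z. poly p z = 0}"
  have fZ: "finite Z" unfolding Z_def using poly_roots_finite[OF p0] .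
  define bad where "bad = (\<lambda>z. - poly chi0 z / poly q z) ` Z"
  have "finite bad" unfolding bad_def using fZ by simp
  then obtain e where e: "e \<notin> bad" using ex_new_if_finite[OF infinite_UNIV_char_0] by blast
  define chi where "chi = chi0 + Polynomial.smult e q"
  have "coprime chi p"
  proof (rule ccontr)
    assume "\<not> coprime chi p"
    then obtain z where z: "poly chi z = 0" "poly p z = 0" using noncoprime_root[OF p0] by blast
    show False
    proof (cases "poly q z = 0")
      case True
      then show False using z chi0q unfolding chi_def by simp
    next
      case False
      from z(1) have "poly chi0 z + e * poly q z = 0" unfolding chi_def by simp
      then have "e = - poly chi0 z / poly q z" using False by (simp add: field_simps add_eq_0_iff)
      then have "e \<in> bad" unfolding bad_def Z_def using z(2) by blast
      then show False using e by simp
    qed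
  qed
  moreover have "\<forall>(a,b)\<in>P. q dvd a - chi*b"
  proof (clarify)
    fix a b assume ab: "(a,b) \<in> P"
    have "a - chi * b = (a - chi0 * b) - q * (Polynomial.smult e b)" unfolding chi_def
      by (simp add: algebra_simps)
    then show "q dvd a - chi * b" using chi0P[OF ab] by (metis dvd_diff dvd_triv_left)
  qed
  ultimately show ?thesis by blast
qed



lemma conv_shift:
  assumes "Suc i < n" "Suc j < n"
  shows "conv n F G (Suc i) (Suc j) - conv n F G i j =
         F (int i + 1) * G (- int j - 1) - F (int i + 1 - int n) * G (int n - 1 - int j)"
proof -
  obtain n' where n: "n = Suc n'" using assms by (cases n) auto
  have a: "conv n F G (Suc i) (Suc j) = F (int i + 1) * G (- int j - 1) + (\<Sum>k<n'. F (int i - int k) * G (int k - int j))"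
  proof -
    have e1: "\<And>k. int (Suc i) - int (Suc k) = int i - int k" by simp
    have e2: "\<And>k. int (Suc k) - int (Suc j) = int k - int j" by simp
    have e3: "int (Suc i) - int 0 = int i + 1" by simp
    have e4: "int 0 - int (Suc j) = - int j - 1" by simp
    show ?thesis unfolding conv_def n sum.lessThan_Suc_shift e1 e2 e3 e4 ..
  qed
  have b: "conv n F G i j = (\<Sum>k<n'. F (int i - int k) * G (int k - int j)) + F (int i - int n') * G (int n' - int j)"
    unfolding conv_def n sum.lessThan_Suc by simp
  have c: "int i - int n' = int i + 1 - int n" "int n' - int j = int n - 1 - int j" using n by auto
  show ?thesis unfolding a b c by (simp add: algebra_simps)
qed

definition Rel :: "nat \<Rightarrow> complex poly \<Rightarrow> (int \<Rightarrow> complex poly) \<Rightarrow> (int \<Rightarrow> complex poly) \<Rightarrow> bool" where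
  "Rel n p F G \<longleftrightarrow> (\<forall>s u. 1 \<le> s \<and> s \<le> int n - 1 \<and> 1 \<le> u \<and> u \<le> int n - 1 \<longrightarrow>
      p dvd F s * G (u - int n) - F (s - int n) * G u)"

lemma conv_diag:
  assumes R: "Rel n p F G"
  shows "i + t < n \<Longrightarrow> j + t < n \<Longrightarrow> p dvd conv n F G (i+t) (j+t) - conv n F G i j"
proof (induction t)
  case 0 then show ?case by simp
next
  case (Suc t)
  have IH: "p dvd conv n F G (i+t) (j+t) - conv n F G i j" using Suc by simp
  have sh: "conv n F G (Suc (i+t)) (Suc (j+t)) - conv n F G (i+t) (j+t) =
      F (int (i+t) + 1) * G (- int (j+t) - 1) - F (int (i+t) + 1 - int n) * G (int n - 1 - int (j+t))"
    by (rule conv_shift) (use Suc in auto)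
  define s where "s = int (i+t) + 1"
  define u where "u = int n - 1 - int (j+t)"
  have "1 \<le> s \<and> s \<le> int n - 1 \<and> 1 \<le> u \<and> u \<le> int n - 1"
    using Suc.prems unfolding s_def u_def by auto
  then have h: "p dvd F s * G (u - int n) - F (s - int n) * G u"
    using R unfolding Rel_def by blast
  have e: "u - int n = - int (j+t) - 1" unfolding u_def by simp
  have "p dvd conv n F G (Suc (i+t)) (Suc (j+t)) - conv n F G (i+t) (j+t)"
    unfolding sh using h[unfolded e] unfolding s_def u_def .
  from dvd_add[OF this IH] show ?case by simp
qed

definition Hc :: "nat \<Rightarrow> (int \<Rightarrow> complex poly) \<Rightarrow> (int \<Rightarrow> complex poly) \<Rightarrow> int \<Rightarrow> complex poly" where
  "Hc n F G m = conv n F G (nat (max m 0)) (nat (max (-m) 0))"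

lemma conv_Hc:
  assumes R: "Rel n p F G" and ij: "i < n" "j < n"
  shows "p dvd conv n F G i j - Hc n F G (int i - int j)"
proof -
  define t where "t = min i j"
  have e: "nat (max (int i - int j) 0) = i - t" "nat (max (- (int i - int j)) 0) = j - t"
    unfolding t_def by auto
  have "p dvd conv n F G ((i-t)+t) ((j-t)+t) - conv n F G (i-t) (j-t)"
    by (rule conv_diag[OF R]) (use ij t_def in auto)
  moreover have "(i-t)+t = i" "(j-t)+t = j" unfolding t_def by auto
  ultimately show ?thesis unfolding Hc_def e by simp
qed

lemma btp_mult_Hc:
  assumes M: "M \<in> carrier_mat d d" and p: "is_min_poly M p" and R: "Rel n p F G"
  shows "btp n d M F * btp n d M G = btp n d M (Hc n F G)"
proof (rule eq_matI)
  fix I J assume "I < dim_row (btp n d M (Hc n F G))" "J < dim_col (btp n d M (Hc n F G))"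
  then have "I < n*d" "J < n*d" by auto
  from idx_decomp[OF this(1)] idx_decomp[OF this(2)]
  obtain i r j c where ij: "i < n" "r < d" "I = i*d+r" "j < n" "c < d" "J = j*d+c" by blast
  have "poly_mat (conv n F G i j) M = poly_mat (Hc n F G (int i - int j)) M"
    using pm_eq_iff[OF M p] conv_Hc[OF R ij(1,4)] by blast
  then show "(btp n d M F * btp n d M G) $$ (I, J) = btp n d M (Hc n F G) $$ (I, J)"
    unfolding ij(3,6) btp_mult_entry[OF M ij(1,4,2,5)] btp_entry[OF ij(1,4,2,5)] by simp
qed auto

lemma rel_of_product:
  assumes M: "M \<in> carrier_mat d d" and p: "is_min_poly M p"
    and H: "btp n d M F * btp n d M G = btp n d M H"
  shows "Rel n p F G"
proof -
  have cH: "p dvd conv n F G i j - H (int i - int j)" if ij: "i < n" "j < n" for i j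
  proof -
    have "poly_mat (conv n F G i j) M = poly_mat (H (int i - int j)) M"
    proof (rule eq_matI)
      fix r c assume "r < dim_row (poly_mat (H (int i - int j)) M)" "c < dim_col (poly_mat (H (int i - int j)) M)"
      then have rc: "r < d" "c < d" using M by auto
      from arg_cong[OF H, of "\<lambda>X. X $$ (i*d+r, j*d+c)"]
      show "poly_mat (conv n F G i j) M $$ (r, c) = poly_mat (H (int i - int j)) M $$ (r, c)"
        unfolding btp_mult_entry[OF M ij rc] btp_entry[OF ij rc] .
    qed (use M in auto)
    then show ?thesis using pm_eq_iff[OF M p] by blast
  qed
  show ?thesis unfolding Rel_def
  proof (intro allI impI)
    fix s u :: int assume su: "1 \<le> s \<and> s \<le> int n - 1 \<and> 1 \<le> u \<and> u \<le> int n - 1"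
    define i where "i = nat (s - 1)"
    define j where "j = nat (int n - 1 - u)"
    have ij: "Suc i < n" "Suc j < n" using su unfolding i_def j_def by auto
    have h1: "p dvd conv n F G (Suc i) (Suc j) - H (int (Suc i) - int (Suc j))" by (rule cH) (use ij in auto)
    have h2: "p dvd conv n F G i j - H (int i - int j)" by (rule cH) (use ij in auto)
    have eq: "int (Suc i) - int (Suc j) = int i - int j" by simp
    from dvd_diff[OF h1[unfolded eq] h2]
    have "p dvd conv n F G (Suc i) (Suc j) - conv n F G i j" by simp
    then have "p dvd F (int i + 1) * G (- int j - 1) - F (int i + 1 - int n) * G (int n - 1 - int j)"
      unfolding conv_shift[OF ij] .
    moreover have eqs: "int i + 1 = s" "- int j - 1 = u - int n" "int n - 1 - int j = u"
      using su unfolding i_def j_def by auto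
    ultimately show "p dvd F s * G (u - int n) - F (s - int n) * G u" unfolding eqs by blast
  qed
qed



definition good :: "nat \<Rightarrow> complex poly \<Rightarrow> complex poly \<Rightarrow> complex poly \<Rightarrow> complex poly \<Rightarrow> (int \<Rightarrow> complex poly) \<Rightarrow> bool" where
  "good n p pp pm chi F \<longleftrightarrow> (\<forall>i\<in>{1..int n - 1}. \<exists>a a'. F i = pp * a \<and> F (i - int n) = pm * a' \<and>
      (p div (pp*pm)) dvd (a - chi * a'))"

lemma frakB_iff:
  assumes M: "M \<in> carrier_mat d d"
  shows "A \<in> frakB n d M p pp pm chi \<longleftrightarrow> (\<exists>F. A = btp n d M F \<and> good n p pp pm chi F)"
proof
  assume "\<exists>F. A = btp n d M F \<and> good n p pp pm chi F"
  then obtain F where A: "A = btp n d M F" and g: "good n p pp pm chi F" by blast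
  show "A \<in> frakB n d M p pp pm chi"
    unfolding frakB_def
  proof (intro CollectI exI conjI)
    show "A = block_toeplitz n d (\<lambda>m. poly_mat (F m) M)" unfolding A btp_def ..
    show "\<forall>m. \<bar>m\<bar> < int n \<longrightarrow> poly_mat (F m) M \<in> polys_in M" unfolding polys_in_def by blast
    show "\<forall>i\<in>{1..int n - 1}. \<exists>a a'. poly_mat (F i) M = poly_mat pp M * poly_mat a M \<and>
          poly_mat (F (i - int n)) M = poly_mat pm M * poly_mat a' M \<and> p div (pp * pm) dvd a - chi * a'"
    proof
      fix i assume i: "i \<in> {1..int n - 1}"
      obtain a a' where a: "F i = pp * a" "F (i - int n) = pm * a'" "p div (pp*pm) dvd a - chi * a'"
        using g i unfolding good_def by blast
      show "\<exists>a a'. poly_mat (F i) M = poly_mat pp M * poly_mat a M \<and>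
          poly_mat (F (i - int n)) M = poly_mat pm M * poly_mat a' M \<and> p div (pp * pm) dvd a - chi * a'"
        by (rule exI[of _ a], rule exI[of _ a']) (simp add: a pm_mult[OF M])
    qed
  qed
next
  assume "A \<in> frakB n d M p pp pm chi"
  then obtain B where A: "A = block_toeplitz n d B" and Bp: "\<forall>m. \<bar>m\<bar> < int n \<longrightarrow> B m \<in> polys_in M"
    and Bc: "\<forall>i\<in>{1..int n - 1}. \<exists>a a'. B i = poly_mat pp M * poly_mat a M \<and>
          B (i - int n) = poly_mat pm M * poly_mat a' M \<and> p div (pp * pm) dvd a - chi * a'"
    unfolding frakB_def by blast
  from Bc have "\<forall>i\<in>{1..int n - 1}. \<exists>aa. B i = poly_mat pp M * poly_mat (fst aa) M \<and>
          B (i - int n) = poly_mat pm M * poly_mat (snd aa) M \<and> p div (pp * pm) dvd fst aa - chi * snd aa"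
    by simp
  then obtain aa where aa: "\<forall>i\<in>{1..int n - 1}. B i = poly_mat pp M * poly_mat (fst (aa i)) M \<and>
          B (i - int n) = poly_mat pm M * poly_mat (snd (aa i)) M \<and> p div (pp * pm) dvd fst (aa i) - chi * snd (aa i)"
    by (metis bchoice)
  define F0 where "F0 m = (SOME f. B m = poly_mat f M)" for m
  define F where "F m = (if 1 \<le> m \<and> m \<le> int n - 1 then pp * fst (aa m)
     else if 1 \<le> m + int n \<and> m + int n \<le> int n - 1 then pm * snd (aa (m + int n)) else F0 m)" for m
  have "B m = poly_mat (F m) M" if m: "\<bar>m\<bar> < int n" for m
  proof (cases "1 \<le> m")
    case True
    then show ?thesis using aa m unfolding F_def by (auto simp: pm_mult[OF M])
  next
    case False
    show ?thesis
    proof (cases "m = 0")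
      case True
      then have "\<exists>f. B m = poly_mat f M" using Bp m unfolding polys_in_def by auto
      then have "B m = poly_mat (F0 m) M" unfolding F0_def by (rule someI_ex)
      then show ?thesis unfolding F_def using True by simp
    next
      case False': False
      then have i: "m + int n \<in> {1..int n - 1}" using m False by auto
      have "B (m + int n - int n) = poly_mat pm M * poly_mat (snd (aa (m + int n))) M" using aa i by blast
      then show ?thesis unfolding F_def using False False' i by (auto simp: pm_mult[OF M])
    qed
  qed
  then have "A = btp n d M F" unfolding A btp_def by (rule block_toeplitz_cong)
  moreover have "good n p pp pm chi F" unfolding good_def
  proof
    fix i assume i: "i \<in> {1..int n - 1}"
    show "\<exists>a a'. F i = pp * a \<and> F (i - int n) = pm * a' \<and> p div (pp * pm) dvd a - chi * a'"
      by (rule exI[of _ "fst (aa i)"], rule exI[of _ "snd (aa i)"]) (use i aa in \<open>auto simp: F_def\<close>)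
  qed
  ultimately show "\<exists>F. A = btp n d M F \<and> good n p pp pm chi F" by blast
qed

lemma btp_zero: assumes M: "M \<in> carrier_mat d d" shows "btp n d M (\<lambda>_. 0) = 0\<^sub>m (n*d) (n*d)"
proof (rule eq_matI)
  fix I J assume "I < dim_row (0\<^sub>m (n * d) (n * d))" "J < dim_col (0\<^sub>m (n * d) (n * d))"
  then have "I < n*d" "J < n*d" by auto
  from idx_decomp[OF this(1)] idx_decomp[OF this(2)]
  obtain i r j c where ij: "i < n" "r < d" "I = i*d+r" "j < n" "c < d" "J = j*d+c" by blast
  show "btp n d M (\<lambda>_. 0) $$ (I, J) = 0\<^sub>m (n * d) (n * d) $$ (I, J)"
    unfolding ij(3,6) btp_entry[OF ij(1,4,2,5)] using ij idx_lt by (simp add: pm_zero[OF M])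
qed auto

lemma btp_add: assumes M: "M \<in> carrier_mat d d" shows "btp n d M F + btp n d M G = btp n d M (\<lambda>m. F m + G m)"
proof (rule eq_matI)
  fix I J assume "I < dim_row (btp n d M (\<lambda>m. F m + G m))" "J < dim_col (btp n d M (\<lambda>m. F m + G m))"
  then have IJ: "I < n*d" "J < n*d" by auto
  from idx_decomp[OF this(1)] idx_decomp[OF this(2)]
  obtain i r j c where ij: "i < n" "r < d" "I = i*d+r" "j < n" "c < d" "J = j*d+c" by blast
  show "(btp n d M F + btp n d M G) $$ (I, J) = btp n d M (\<lambda>m. F m + G m) $$ (I, J)"
    using IJ M ij unfolding ij(3,6) by (simp add: btp_entry[OF ij(1,4,2,5)] pm_add[OF M] ij)
qed auto

lemma btp_smult: assumes M: "M \<in> carrier_mat d d" shows "e \<cdot>\<^sub>m btp n d M F = btp n d M (\<lambda>m. Polynomial.smult e (F m))"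
proof (rule eq_matI)
  fix I J assume "I < dim_row (btp n d M (\<lambda>m. Polynomial.smult e (F m)))" "J < dim_col (btp n d M (\<lambda>m. Polynomial.smult e (F m)))"
  then have IJ: "I < n*d" "J < n*d" by auto
  from idx_decomp[OF this(1)] idx_decomp[OF this(2)]
  obtain i r j c where ij: "i < n" "r < d" "I = i*d+r" "j < n" "c < d" "J = j*d+c" by blast
  show "(e \<cdot>\<^sub>m btp n d M F) $$ (I, J) = btp n d M (\<lambda>m. Polynomial.smult e (F m)) $$ (I, J)"
    using IJ M ij unfolding ij(3,6) by (simp add: btp_entry[OF ij(1,4,2,5)] pm_smult[OF M] ij)
qed auto

lemma good_zero: "good n p pp pm chi (\<lambda>_. 0)"
  unfolding good_def by (auto intro!: exI[of _ 0])

lemma good_add: assumes "good n p pp pm chi F" "good n p pp pm chi G"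
  shows "good n p pp pm chi (\<lambda>m. F m + G m)"
  unfolding good_def
proof
  fix i assume i: "i \<in> {1..int n - 1}"
  obtain a a' where a: "F i = pp * a" "F (i - int n) = pm * a'" "p div (pp*pm) dvd a - chi * a'"
    using assms(1) i unfolding good_def by blast
  obtain b b' where b: "G i = pp * b" "G (i - int n) = pm * b'" "p div (pp*pm) dvd b - chi * b'"
    using assms(2) i unfolding good_def by blast
  have "(a + b) - chi * (a' + b') = (a - chi * a') + (b - chi * b')" by (simp add: algebra_simps)
  then have "p div (pp*pm) dvd (a + b) - chi * (a' + b')" using a(3) b(3) by (metis dvd_add)
  then show "\<exists>a a'. F i + G i = pp * a \<and> F (i - int n) + G (i - int n) = pm * a' \<and> p div (pp * pm) dvd a - chi * a'"
    using a b by (intro exI[of _ "a+b"] exI[of _ "a'+b'"]) (simp add: algebra_simps)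
qed

lemma good_smult: assumes "good n p pp pm chi F"
  shows "good n p pp pm chi (\<lambda>m. Polynomial.smult e (F m))"
  unfolding good_def
proof
  fix i assume i: "i \<in> {1..int n - 1}"
  obtain a a' where a: "F i = pp * a" "F (i - int n) = pm * a'" "p div (pp*pm) dvd a - chi * a'"
    using assms(1) i unfolding good_def by blast
  have "Polynomial.smult e a - chi * Polynomial.smult e a' = [:e:] * (a - chi * a')" by (simp add: algebra_simps)
  then have "p div (pp*pm) dvd Polynomial.smult e a - chi * Polynomial.smult e a'" using a(3) by (simp add: dvd_smult)
  then show "\<exists>b b'. Polynomial.smult e (F i) = pp * b \<and> Polynomial.smult e (F (i - int n)) = pm * b' \<and> p div (pp * pm) dvd b - chi * b'"
    using a by (intro exI[of _ "Polynomial.smult e a"] exI[of _ "Polynomial.smult e a'"]) simp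
qed

lemma good_Rel:
  assumes pq: "pp * pm * (p div (pp*pm)) = p"
    and F: "good n p pp pm chi F" and G: "good n p pp pm chi G"
  shows "Rel n p F G"
  unfolding Rel_def
proof (intro allI impI)
  fix s u assume su: "1 \<le> s \<and> s \<le> int n - 1 \<and> 1 \<le> u \<and> u \<le> int n - 1"
  have s1: "s \<in> {1..int n - 1}" "u \<in> {1..int n - 1}" using su by auto
  obtain a a' where a: "F s = pp * a" "F (s - int n) = pm * a'" "p div (pp*pm) dvd a - chi * a'"
    using F s1 unfolding good_def by blast
  obtain b b' where b: "G u = pp * b" "G (u - int n) = pm * b'" "p div (pp*pm) dvd b - chi * b'"
    using G s1 unfolding good_def by blast
  define q where "q = p div (pp*pm)"
  have "q dvd (a - chi * a') * b' - a' * (b - chi * b')" using a(3) b(3) unfolding q_def by simp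
  moreover have "(a - chi * a') * b' - a' * (b - chi * b') = a * b' - a' * b" by (simp add: algebra_simps)
  ultimately have "pp * pm * q dvd pp * pm * (a * b' - a' * b)" by simp
  moreover have "F s * G (u - int n) - F (s - int n) * G u = pp * pm * (a * b' - a' * b)"
    unfolding a b by (simp add: algebra_simps)
  ultimately show "p dvd F s * G (u - int n) - F (s - int n) * G u" using pq unfolding q_def by simp
qed



lemma sum_rot:
  fixes n s0 :: nat
  assumes "s0 \<le> n"
  shows "(\<Sum>k<n. f (if k < s0 then k + n - s0 else k - s0)) = (\<Sum>k<n. f k)"
proof (rule sum.reindex_bij_witness[where j = "\<lambda>k. if k < s0 then k + n - s0 else k - s0"
      and i = "\<lambda>b. if b < n - s0 then b + s0 else b + s0 - n"])
qed (use assms in auto)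

lemma term_match:
  fixes s k n :: int and F G :: "int \<Rightarrow> complex poly"
  assumes r: "1 \<le> s" "s \<le> n - 1" "0 \<le> k" "k \<le> n - 1"
   and Fa: "\<And>i. i \<in> {1..n-1} \<Longrightarrow> F i = pp * a i \<and> F (i - n) = pm * a' i \<and> q dvd a i - chi * a' i"
   and Gb: "\<And>i. i \<in> {1..n-1} \<Longrightarrow> G i = pp * b i \<and> G (i - n) = pm * b' i \<and> q dvd b i - chi * b' i"
   and sg: "sg = (if k < s then k + n - s else k - s)"
  shows "\<exists>u v. F (s - k) * G k = pp * u \<and> F (- sg) * G (sg - n + s) = pm * v \<and> q dvd u - chi * v"
proof (cases "k < s")
  case True
  define i where "i = s - k"
  have i: "i \<in> {1..n-1}" using True r unfolding i_def by auto
  have e: "s - k = i" "- sg = i - n" "sg - n + s = k" using True sg unfolding i_def by auto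
  have "q dvd (a i - chi * a' i) * G k" using Fa[OF i] by simp
  moreover have "(a i - chi * a' i) * G k = a i * G k - chi * (a' i * G k)" by (simp add: algebra_simps)
  ultimately show ?thesis unfolding e using Fa[OF i]
    by (intro exI[of _ "a i * G k"] exI[of _ "a' i * G k"]) (simp add: algebra_simps)
next
  case False
  show ?thesis
  proof (cases "k = s")
    case True
    have i: "s \<in> {1..n-1}" using r by auto
    have e: "s - k = 0" "- sg = 0" "sg - n + s = s - n" "k = s" using True sg by auto
    have "q dvd F 0 * (b s - chi * b' s)" using Gb[OF i] by simp
    moreover have "F 0 * (b s - chi * b' s) = F 0 * b s - chi * (F 0 * b' s)" by (simp add: algebra_simps)
    ultimately show ?thesis unfolding e using Gb[OF i]
      by (intro exI[of _ "F 0 * b s"] exI[of _ "F 0 * b' s"]) (simp add: algebra_simps)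
  next
    case False': False
    define i where "i = s - k + n"
    have i: "i \<in> {1..n-1}" using False False' r unfolding i_def by auto
    have kk: "k \<in> {1..n-1}" using False False' r by auto
    have e: "s - k = i - n" "- sg = i - n" "sg - n + s = k - n" using False sg unfolding i_def by auto
    have "q dvd (pm * a' i) * (b k - chi * b' k)" using Gb[OF kk] by simp
    moreover have "(pm * a' i) * (b k - chi * b' k) = pm * a' i * b k - chi * (a' i * (pm * b' k))"
      by (simp add: algebra_simps)
    ultimately show ?thesis unfolding e using Fa[OF i] Gb[OF kk]
      by (intro exI[of _ "pm * a' i * b k"] exI[of _ "a' i * (pm * b' k)"]) (simp add: algebra_simps)
  qed
qed

lemma good_Hc:
  assumes F: "good n p pp pm chi F" and G: "good n p pp pm chi G"
  shows "good n p pp pm chi (Hc n F G)"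
  unfolding good_def
proof
  fix s assume s: "s \<in> {1..int n - 1}"
  define q where "q = p div (pp*pm)"
  have "\<forall>i\<in>{1..int n-1}. \<exists>aa. F i = pp * fst aa \<and> F (i - int n) = pm * snd aa \<and> q dvd fst aa - chi * snd aa"
    using F unfolding good_def q_def by auto
  then obtain aa where Fa: "\<forall>i\<in>{1..int n-1}. F i = pp * fst (aa i) \<and> F (i - int n) = pm * snd (aa i) \<and> q dvd fst (aa i) - chi * snd (aa i)"
    by (metis bchoice)
  have "\<forall>i\<in>{1..int n-1}. \<exists>bb. G i = pp * fst bb \<and> G (i - int n) = pm * snd bb \<and> q dvd fst bb - chi * snd bb"
    using G unfolding good_def q_def by auto
  then obtain bb where Gb: "\<forall>i\<in>{1..int n-1}. G i = pp * fst (bb i) \<and> G (i - int n) = pm * snd (bb i) \<and> q dvd fst (bb i) - chi * snd (bb i)"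
    by (metis bchoice)
  define s0 where "s0 = nat s"
  have s0: "s = int s0" "1 \<le> s0" "s0 < n" using s unfolding s0_def by auto
  define sg where "sg k = (if k < s0 then k + n - s0 else k - s0)" for k :: nat
  have sgi: "int (sg k) = (if int k < s then int k + int n - s else int k - s)" if "k < n" for k
    using that s0 unfolding sg_def by auto
  have "\<forall>k\<in>{..<n}. \<exists>uv. F (s - int k) * G (int k) = pp * fst uv \<and>
      F (- int (sg k)) * G (int (sg k) - int n + s) = pm * snd uv \<and> q dvd fst uv - chi * snd uv"
  proof
    fix k assume k: "k \<in> {..<n}"
    have "\<exists>u v. F (s - int k) * G (int k) = pp * u \<and> F (- int (sg k)) * G (int (sg k) - int n + s) = pm * v \<and> q dvd u - chi * v"
      by (rule term_match[where a = "\<lambda>i. fst (aa i)" and a' = "\<lambda>i. snd (aa i)" and b = "\<lambda>i. fst (bb i)" and b' = "\<lambda>i. snd (bb i)"])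
        (use s k Fa Gb sgi in auto)
    then show "\<exists>uv. F (s - int k) * G (int k) = pp * fst uv \<and>
      F (- int (sg k)) * G (int (sg k) - int n + s) = pm * snd uv \<and> q dvd fst uv - chi * snd uv" by auto
  qed
  then obtain uv where uv: "\<forall>k\<in>{..<n}. F (s - int k) * G (int k) = pp * fst (uv k) \<and>
      F (- int (sg k)) * G (int (sg k) - int n + s) = pm * snd (uv k) \<and> q dvd fst (uv k) - chi * snd (uv k)"
    by (metis bchoice)
  have h1: "Hc n F G s = pp * (\<Sum>k<n. fst (uv k))"
  proof -
    have "Hc n F G s = conv n F G s0 0" unfolding Hc_def using s0 by simp
    also have "\<dots> = (\<Sum>k<n. F (s - int k) * G (int k))" unfolding conv_def s0(1) by simp
    also have "\<dots> = (\<Sum>k<n. pp * fst (uv k))" using uv by (intro sum.cong) auto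
    finally show ?thesis by (simp add: sum_distrib_left)
  qed
  have h2: "Hc n F G (s - int n) = pm * (\<Sum>k<n. snd (uv k))"
  proof -
    have "Hc n F G (s - int n) = conv n F G 0 (n - s0)" unfolding Hc_def using s0 by (simp add: nat_diff_distrib)
    also have "\<dots> = (\<Sum>k<n. F (- int k) * G (int k - int (n - s0)))" unfolding conv_def by simp
    also have "\<dots> = (\<Sum>k<n. F (- int (sg k)) * G (int (sg k) - int (n - s0)))"
      unfolding sg_def by (rule sum_rot[symmetric]) (use s0 in auto)
    also have "\<dots> = (\<Sum>k<n. F (- int (sg k)) * G (int (sg k) - int n + s))"
    proof (rule sum.cong[OF refl])
      fix k
      have e: "int (sg k) - int (n - s0) = int (sg k) - int n + s" using s0 by auto
      show "F (- int (sg k)) * G (int (sg k) - int (n - s0)) = F (- int (sg k)) * G (int (sg k) - int n + s)"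
        unfolding e ..
    qed
    also have "\<dots> = (\<Sum>k<n. pm * snd (uv k))" using uv by (intro sum.cong) auto
    finally show ?thesis by (simp add: sum_distrib_left)
  qed
  have "q dvd (\<Sum>k<n. fst (uv k) - chi * snd (uv k))" using uv by (intro dvd_sum) auto
  moreover have "(\<Sum>k<n. fst (uv k) - chi * snd (uv k)) = (\<Sum>k<n. fst (uv k)) - chi * (\<Sum>k<n. snd (uv k))"
    by (simp add: sum_subtractf sum_distrib_left)
  ultimately show "\<exists>a a'. Hc n F G s = pp * a \<and> Hc n F G (s - int n) = pm * a' \<and> p div (pp * pm) dvd a - chi * a'"
    using h1 h2 unfolding q_def by auto
qed



theorem theorem7p5:
  fixes n d :: nat and M :: "complex mat" and p :: "complex poly" and \<B> :: "complex mat set"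
  assumes "n \<ge> 2"
    and "M \<in> carrier_mat d d"
    and "nonderogatory M"
    and "is_min_poly M p"
    and "maximal_subalgebra_of (n*d) (toeplitz_alg n d M) \<B>"
  shows "\<exists>pp pm chi :: complex poly. (pp * pm) dvd p \<and> coprime chi p \<and>
           \<B> = frakB n d M p pp pm chi"
proof -
  note M = assms(2) and mp = assms(4)
  have p0: "p \<noteq> 0" using mp unfolding is_min_poly_def by auto
  have sub: "is_subalgebra (n*d) \<B>" and BT: "\<B> \<subseteq> toeplitz_alg n d M"
    and maxi: "\<And>S'. is_subalgebra (n*d) S' \<Longrightarrow> S' \<subseteq> toeplitz_alg n d M \<Longrightarrow> \<B> \<subseteq> S' \<Longrightarrow> S' = \<B>"
    using assms(5) unfolding maximal_subalgebra_of_def by auto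
  define FA where "FA A = (SOME F. A = btp n d M F)" for A
  have FA: "A = btp n d M (FA A)" if "A \<in> \<B>" for A
  proof -
    have "\<exists>F. A = btp n d M F" using that BT toeplitz_alg_iff by blast
    then show ?thesis unfolding FA_def by (rule someI_ex)
  qed
  have RelAll: "Rel n p (FA A) (FA B)" if "A \<in> \<B>" "B \<in> \<B>" for A B
  proof -
    have "A * B \<in> \<B>" using sub that unfolding is_subalgebra_def by blast
    then obtain H where "A * B = btp n d M H" using BT toeplitz_alg_iff by blast
    then have "btp n d M (FA A) * btp n d M (FA B) = btp n d M H" using FA that by simp
    then show ?thesis by (rule rel_of_product[OF M mp])
  qed
  define I where "I = {1..int n - 1}"
  define Xs where "Xs = {FA A s | A s. A \<in> \<B> \<and> s \<in> I}"
  define Ys where "Ys = {FA A (s - int n) | A s. A \<in> \<B> \<and> s \<in> I}"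
  define pp where "pp = Gcd (insert p Xs)"
  define pm where "pm = gcd (Gcd (insert p Ys)) (p div pp)"
  define q where "q = p div (pp * pm)"
  have ppp: "pp dvd p" unfolding pp_def by (rule Gcd_dvd) simp
  have pp0: "pp \<noteq> 0" using ppp p0 by auto
  have pmd: "pm dvd p div pp" unfolding pm_def by simp
  have pdpp: "pp * (p div pp) = p" using ppp by simp
  have pm0: "pm \<noteq> 0" using pmd pdpp p0 by auto
  have ppm: "pp * pm dvd p" using pdpp pmd by (metis mult_dvd_mono dvd_refl)
  have pq: "pp * pm * q = p" unfolding q_def using ppm by simp
  have ppx: "FA A s = pp * (FA A s div pp)" if "A \<in> \<B>" "s \<in> I" for A s
  proof -
    have "pp dvd FA A s" unfolding pp_def by (rule Gcd_dvd) (use that Xs_def in blast)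
    then show ?thesis by simp
  qed
  have pmy: "FA A (s - int n) = pm * (FA A (s - int n) div pm)" if "A \<in> \<B>" "s \<in> I" for A s
  proof -
    have "Gcd (insert p Ys) dvd FA A (s - int n)" by (rule Gcd_dvd) (use that Ys_def in blast)
    then have "pm dvd FA A (s - int n)" unfolding pm_def by (meson dvd_trans gcd_dvd1)
    then show ?thesis by simp
  qed
  define P where "P = {(FA A s div pp, FA A (s - int n) div pm) | A s. A \<in> \<B> \<and> s \<in> I}"
  have rel: "\<forall>(a,b)\<in>P. \<forall>(a',b')\<in>P. q dvd a*b' - b*a'"
  proof (clarify)
    fix a b a' b' assume ab: "(a,b) \<in> P" and ab': "(a',b') \<in> P"
    from ab obtain A s where A: "A \<in> \<B>" "s \<in> I" "a = FA A s div pp" "b = FA A (s - int n) div pm"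
      unfolding P_def by blast
    from ab' obtain B u where B: "B \<in> \<B>" "u \<in> I" "a' = FA B u div pp" "b' = FA B (u - int n) div pm"
      unfolding P_def by blast
    have "p dvd FA A s * FA B (u - int n) - FA A (s - int n) * FA B u"
      using RelAll[OF A(1) B(1)] A(2) B(2) unfolding Rel_def I_def by auto
    also have "FA A s * FA B (u - int n) - FA A (s - int n) * FA B u = pp * pm * (a*b' - b*a')"
      using ppx[OF A(1,2)] pmy[OF A(1,2)] ppx[OF B(1,2)] pmy[OF B(1,2)] A(3,4) B(3,4)
      by (metis (no_types, lifting) mult.commute mult.left_commute right_diff_distrib)
    finally have "pp * pm * q dvd pp * pm * (a*b' - b*a')" using pq by simp
    then show "q dvd a*b' - b*a'" using pp0 pm0 by (simp add: mult.assoc)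
  qed
  have ca: "is_unit g" if g: "g dvd q" "\<forall>(a,b)\<in>P. g dvd a" for g
  proof -
    have "g * pp dvd pp"
    proof -
      have "g * pp dvd Gcd (insert p Xs)"
      proof (rule Gcd_greatest)
        fix x assume "x \<in> insert p Xs"
        then show "g * pp dvd x"
        proof
          assume "x = p"
          then show ?thesis using g(1) pq by (metis dvd_mult2 mult.commute mult_dvd_mono dvd_refl mult.assoc)
        next
          assume "x \<in> Xs"
          then obtain A s where A: "A \<in> \<B>" "s \<in> I" "x = FA A s" unfolding Xs_def by blast
          have "(FA A s div pp, FA A (s - int n) div pm) \<in> P" unfolding P_def using A by blast
          then have "g dvd FA A s div pp" using g(2) by auto
          then show ?thesis using ppx[OF A(1,2)] A(3) by (metis mult.commute mult_dvd_mono dvd_refl)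
        qed
      qed
      then show "g * pp dvd pp" by (simp only: pp_def[symmetric])
    qed
    then have "g * pp dvd 1 * pp" by simp
    then show ?thesis using pp0 by (metis dvd_times_right_cancel_iff)
  qed
  have cb: "is_unit g" if g: "g dvd q" "\<forall>(a,b)\<in>P. g dvd b" for g
  proof -
    have "g * pm dvd Gcd (insert p Ys)"
    proof (rule Gcd_greatest)
      fix x assume "x \<in> insert p Ys"
      then show "g * pm dvd x"
      proof
        assume "x = p"
        then show ?thesis using g(1) pq by (metis dvd_mult2 mult.commute mult_dvd_mono dvd_refl mult.assoc)
      next
        assume "x \<in> Ys"
        then obtain A s where A: "A \<in> \<B>" "s \<in> I" "x = FA A (s - int n)" unfolding Ys_def by blast
        have "(FA A s div pp, FA A (s - int n) div pm) \<in> P" unfolding P_def using A by blast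
        then have "g dvd FA A (s - int n) div pm" using g(2) by auto
        then show ?thesis using pmy[OF A(1,2)] A(3) by (metis mult.commute mult_dvd_mono dvd_refl)
      qed
    qed
    moreover have "g * pm dvd p div pp"
    proof -
      have "p div pp = pm * q" using pq pp0 by (metis mult.assoc nonzero_mult_div_cancel_left)
      then show ?thesis using g(1) by (metis mult.commute mult_dvd_mono dvd_refl)
    qed
    ultimately have "g * pm dvd pm" unfolding pm_def by (rule gcd_greatest)
    then have "g * pm dvd 1 * pm" by simp
    then show ?thesis using pm0 by (metis dvd_times_right_cancel_iff)
  qed
  have qp: "q dvd p" using pq by (metis dvd_triv_right)
  obtain chi where chi: "coprime chi p" and chiP: "\<forall>(a,b)\<in>P. q dvd a - chi*b"
    using chi_exists[OF p0 qp rel ca cb] by blast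
  define fB where "fB = frakB n d M p pp pm chi"
  have BfB: "\<B> \<subseteq> fB"
  proof
    fix A assume A: "A \<in> \<B>"
    have "good n p pp pm chi (FA A)" unfolding good_def
    proof
      fix i assume i: "i \<in> {1..int n - 1}"
      then have iI: "i \<in> I" unfolding I_def .
      have "(FA A i div pp, FA A (i - int n) div pm) \<in> P" unfolding P_def using A iI by blast
      then have "q dvd FA A i div pp - chi * (FA A (i - int n) div pm)" using chiP by auto
      then show "\<exists>a a'. FA A i = pp * a \<and> FA A (i - int n) = pm * a' \<and> p div (pp * pm) dvd a - chi * a'"
        using ppx[OF A iI] pmy[OF A iI] unfolding q_def by blast
    qed
    then show "A \<in> fB" unfolding fB_def frakB_iff[OF M] using FA[OF A] by blast
  qed
  have fBT: "fB \<subseteq> toeplitz_alg n d M"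
    unfolding fB_def using frakB_iff[OF M] toeplitz_alg_iff by blast
  have fBsub: "is_subalgebra (n*d) fB"
    unfolding is_subalgebra_def
  proof (intro conjI ballI allI)
    show "fB \<subseteq> carrier_mat (n * d) (n * d)" unfolding fB_def using frakB_iff[OF M] by auto
    show "0\<^sub>m (n * d) (n * d) \<in> fB" unfolding fB_def frakB_iff[OF M]
      using btp_zero[OF M] good_zero by metis
  next
    fix A B assume "A \<in> fB" "B \<in> fB"
    then obtain F G where F: "A = btp n d M F" "good n p pp pm chi F" and G: "B = btp n d M G" "good n p pp pm chi G"
      unfolding fB_def frakB_iff[OF M] by blast
    show "A + B \<in> fB" unfolding fB_def frakB_iff[OF M] F(1) G(1) btp_add[OF M]
      using good_add[OF F(2) G(2)] by blast
    have R: "Rel n p F G" by (rule good_Rel[OF _ F(2) G(2)]) (use pq q_def in simp)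
    show "A * B \<in> fB" unfolding fB_def frakB_iff[OF M] F(1) G(1) btp_mult_Hc[OF M mp R]
      using good_Hc[OF F(2) G(2)] by blast
  next
    fix c A assume "A \<in> fB"
    then obtain F where F: "A = btp n d M F" "good n p pp pm chi F"
      unfolding fB_def frakB_iff[OF M] by blast
    show "c \<cdot>\<^sub>m A \<in> fB" unfolding fB_def frakB_iff[OF M] F(1) btp_smult[OF M]
      using good_smult[OF F(2)] by blast
  qed
  have "fB = \<B>" by (rule maxi[OF fBsub fBT BfB])
  then show ?thesis using ppm chi unfolding fB_def by blast
qed


end
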